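(* Let $k\in\mathbb{N}$ and let $H=\sum_P\alpha_PP$ be an $n$-qubit Hamiltonian with $\|H\|_\infty\le1$ and $\mathrm{tr}(H)=0$, and let $A=\Pi_D(I^{\otimes n}\otimes H)\Pi_D$ and $H_{>k}=\sum_{|P|>k}\alpha_PP$. Then for every integer $\ell\ge2$, \[ |\langle\sigma_{I^{\otimes n}}|A^\ell|\sigma_{I^{\otimes n}}\rangle| \le \langle\sigma_{I^{\otimes n}}|A^2|\sigma_{I^{\otimes n}}\rangle = \|H_{>k}\|_2^2. \]
   Context: The $n$-qubit Paulis are $\{I,X,Y,Z\}^{\otimes n}$ with weight $|P|$ the number of non-identity factors; every Hamiltonian is uniquely $H=\sum_P\alpha_PP$ with real $\alpha_P$. $|\sigma_{I^{\otimes n}}\rangle=2^{-n/2}\sum_{x}|x\rangle\otimes|x\rangle$ and $|\sigma_P\rangle=(I^{\otimes n}\otimes P)|\sigma_{I^{\otimes n}}\rangle$. $D$ is the span of $|\sigma_P\rangle$ for $P=I^{\otimes n}$ or $|P|>k$; $\Pi_D$ is its projector. $\|M\|_2=\sqrt{\mathrm{tr}(M^\dagger M)/2^n}$ is the normalized Frobenius norm and $\|\cdot\|_\infty$ the spectral norm. *)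

theory Defs
  imports "Jordan_Normal_Form.Matrix" Complex_Main
begin

datatype pauli = PI | PX | PY | PZ

fun pauli_entry :: "pauli \<Rightarrow> nat \<Rightarrow> nat \<Rightarrow> complex" where
  "pauli_entry PI a b = (if a = b then 1 else 0)"
| "pauli_entry PX a b = (if a \<noteq> b then 1 else 0)"
| "pauli_entry PY a b = (if a = b then 0 else if a = 0 then - \<i> else \<i>)"
| "pauli_entry PZ a b = (if a \<noteq> b then 0 else if a = 0 then 1 else -1)"

text \<open>An n-qubit Pauli string is a list of length n; qubit i corresponds to the
  (n-1-i)-th binary digit of a basis index (qubit 0 is the most significant one),
  i.e. the matrix is the Kronecker product P_0 \<otimes> ... \<otimes> P_(n-1).\<close>

definition paulis :: "nat \<Rightarrow> pauli list set" where
  "paulis n = {ps. length ps = n}"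

definition weight :: "pauli list \<Rightarrow> nat" where
  "weight ps = length (filter (\<lambda>p. p \<noteq> PI) ps)"

definition bit_at :: "nat \<Rightarrow> nat \<Rightarrow> nat \<Rightarrow> nat" where
  "bit_at n i x = x div 2 ^ (n - 1 - i) mod 2"

definition pauli_mat :: "pauli list \<Rightarrow> complex mat" where
  "pauli_mat ps = (let n = length ps in
     mat (2 ^ n) (2 ^ n)
       (\<lambda>(x, y). \<Prod>i<n. pauli_entry (ps ! i) (bit_at n i x) (bit_at n i y)))"

definition pauli_sum :: "nat \<Rightarrow> (pauli list \<Rightarrow> real) \<Rightarrow> pauli list set \<Rightarrow> complex mat" where
  "pauli_sum n \<alpha> S = mat (2 ^ n) (2 ^ n)
     (\<lambda>(i, j). \<Sum>P\<in>S. complex_of_real (\<alpha> P) * pauli_mat P $$ (i, j))"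

definition mtrace :: "complex mat \<Rightarrow> complex" where
  "mtrace M = (\<Sum>i<dim_row M. M $$ (i, i))"

definition kron :: "complex mat \<Rightarrow> complex mat \<Rightarrow> complex mat" where
  "kron A B = mat (dim_row A * dim_row B) (dim_col A * dim_col B)
     (\<lambda>(i, j). A $$ (i div dim_row B, j div dim_col B) * B $$ (i mod dim_row B, j mod dim_col B))"

definition adj :: "complex mat \<Rightarrow> complex mat" where
  "adj M = mat (dim_col M) (dim_row M) (\<lambda>(i, j). cnj (M $$ (j, i)))"

definition vnorm :: "complex vec \<Rightarrow> real" where
  "vnorm v = sqrt (\<Sum>i<dim_vec v. (cmod (v $ i))\<^sup>2)"

definition spec_norm :: "complex mat \<Rightarrow> real" where
  "spec_norm M = Sup {vnorm (M *\<^sub>v v) | v. v \<in> carrier_vec (dim_col M) \<and> vnorm v \<le> 1}"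

definition nfrob :: "nat \<Rightarrow> complex mat \<Rightarrow> real" where
  "nfrob n M = sqrt (Re (mtrace (adj M * M)) / 2 ^ n)"

definition braket :: "complex vec \<Rightarrow> complex vec \<Rightarrow> complex" where
  "braket u v = (\<Sum>i<dim_vec u. cnj (u $ i) * v $ i)"

definition orth_proj :: "nat \<Rightarrow> complex vec set \<Rightarrow> complex mat" where
  "orth_proj N V = (THE M. M \<in> carrier_mat N N \<and> M * M = M \<and> adj M = M \<and>
      {M *\<^sub>v v | v. v \<in> carrier_vec N} = V)"

text \<open>Two copies of n qubits: basis |x>\<otimes>|y> has index x * 2^n + y (consistent with kron).\<close>
definition sigma_I :: "nat \<Rightarrow> complex vec" where
  "sigma_I n = vec (2 ^ n * 2 ^ n)
     (\<lambda>j. if j div 2 ^ n = j mod 2 ^ n then complex_of_real (1 / sqrt (2 ^ n)) else 0)"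

definition sigma :: "nat \<Rightarrow> pauli list \<Rightarrow> complex vec" where
  "sigma n P = kron (1\<^sub>m (2 ^ n)) (pauli_mat P) *\<^sub>v sigma_I n"

definition D_paulis :: "nat \<Rightarrow> nat \<Rightarrow> pauli list set" where
  "D_paulis n k = {P \<in> paulis n. P = replicate n PI \<or> weight P > k}"

text \<open>D = span of the \<sigma>_P, P \<in> D_paulis (finite family, so: all linear combinations).\<close>
definition D_space :: "nat \<Rightarrow> nat \<Rightarrow> complex vec set" where
  "D_space n k = {vec (2 ^ n * 2 ^ n) (\<lambda>j. \<Sum>P\<in>D_paulis n k. c P * sigma n P $ j) | c. True}"

definition Pi_D :: "nat \<Rightarrow> nat \<Rightarrow> complex mat" where
  "Pi_D n k = orth_proj (2 ^ n * 2 ^ n) (D_space n k)"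

end

theory Submission
  imports Defs "HOL-Analysis.L2_Norm"
begin


lemma sum_add_range: "(\<Sum>j<m+b. f j) = (\<Sum>j<m. f j) + (\<Sum>y<b. f (m+y))"
  for f :: "nat \<Rightarrow> 'b::comm_monoid_add"
  by (induction b) (simp_all add: add.assoc)

lemma sum_split_mult: "(\<Sum>j<a*b. f j) = (\<Sum>x<a. \<Sum>y<b. f (x*b+y))"
  for f :: "nat \<Rightarrow> 'b::comm_monoid_add"
proof (induction a)
  case 0 then show ?case by simp
next
  case (Suc a)
  have "(\<Sum>j<Suc a*b. f j) = (\<Sum>j<a*b + b. f j)" by (simp add: add.commute)
  also have "\<dots> = (\<Sum>j<a*b. f j) + (\<Sum>y<b. f (a*b+y))" by (rule sum_add_range)
  finally show ?case using Suc by simp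
qed

definition vz :: "nat \<Rightarrow> complex mat \<Rightarrow> complex vec" where
  "vz N B = vec (N*N) (\<lambda>j. B $$ (j mod N, j div N) * complex_of_real (1 / sqrt (real N)))"

definition fip :: "nat \<Rightarrow> complex mat \<Rightarrow> complex mat \<Rightarrow> complex" where
  "fip N A B = (\<Sum>i<N. \<Sum>j<N. cnj (A $$ (i,j)) * B $$ (i,j))"

lemma dim_vz[simp]: "dim_vec (vz N B) = N*N" by (simp add: vz_def)

lemma divmod_simps:
  fixes x y N :: nat assumes "y < N"
  shows "(x*N+y) div N = x" "(x*N+y) mod N = y"
  using assms by auto

lemma kron_vz:
  assumes M: "M \<in> carrier_mat N N" and B: "B \<in> carrier_mat N N"
  shows "kron (1\<^sub>m N) M *\<^sub>v vz N B = vz N (M * B)"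
proof (rule eq_vecI)
  show "dim_vec (kron (1\<^sub>m N) M *\<^sub>v vz N B) = dim_vec (vz N (M * B))"
    using M by (simp add: kron_def vz_def)
next
  fix j assume "j < dim_vec (vz N (M * B))"
  hence j: "j < N*N" by (simp add: vz_def)
  hence N: "N > 0" by (cases N) auto
  have jd: "j div N < N" using j by (simp add: less_mult_imp_div_less)
  have jm: "j mod N < N" using N by simp
  let ?c = "complex_of_real (1 / sqrt (real N))"
  have "(kron (1\<^sub>m N) M *\<^sub>v vz N B) $ j = (\<Sum>l<N*N. kron (1\<^sub>m N) M $$ (j,l) * vz N B $ l)"
    using j M by (auto simp: kron_def scalar_prod_def atLeast0LessThan intro!: sum.cong)
  also have "\<dots> = (\<Sum>x<N. \<Sum>y<N. kron (1\<^sub>m N) M $$ (j,x*N+y) * vz N B $ (x*N+y))"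
    by (rule sum_split_mult)
  also have "\<dots> = (\<Sum>x<N. \<Sum>y<N. (if j div N = x then M $$ (j mod N, y) * (B $$ (y, x) * ?c) else 0))"
  proof (intro sum.cong refl)
    fix x y assume x: "x \<in> {..<N}" and y: "y \<in> {..<N}"
    have xy: "x*N+y < N*N"
    proof -
      have "x*N+y < x*N+N" using y by simp
      also have "\<dots> = Suc x * N" by simp
      also have "\<dots> \<le> N*N" using x by (intro mult_le_mono1) simp
      finally show ?thesis .
    qed
    show "kron (1\<^sub>m N) M $$ (j,x*N+y) * vz N B $ (x*N+y) = (if j div N = x then M $$ (j mod N, y) * (B $$ (y, x) * ?c) else 0)"
      using j xy x y M jd by (simp add: kron_def vz_def divmod_simps)
  qed
  also have "\<dots> = (\<Sum>y<N. M $$ (j mod N, y) * (B $$ (y, j div N) * ?c))"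
    using jd by (simp add: sum.swap[of _ "{..<N}" "{..<N}"])
  also have "\<dots> = vz N (M * B) $ j"
    using j jd jm M B by (simp add: vz_def scalar_prod_def atLeast0LessThan sum_distrib_right mult.assoc sum_divide_distrib)
  finally show "(kron (1\<^sub>m N) M *\<^sub>v vz N B) $ j = vz N (M * B) $ j" .
qed



lemma idx_lt: fixes i1 i2 a b :: nat assumes "i1 < a" "i2 < b" shows "i1*b+i2 < a*b"
proof -
  have "i1*b+i2 < i1*b+b" using assms by simp
  also have "\<dots> = Suc i1 * b" by simp
  also have "\<dots> \<le> a*b" using assms by (intro mult_le_mono1) simp
  finally show ?thesis .
qed

lemma cc_real: "cnj (complex_of_real (1 / sqrt (real N))) * complex_of_real (1 / sqrt (real N)) = 1 / of_nat N"
proof -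
  have "(1 / sqrt (real N)) * (1 / sqrt (real N)) = 1 / real N" by simp
  hence "complex_of_real ((1 / sqrt (real N)) * (1 / sqrt (real N))) = 1 / of_nat N" by simp
  thus ?thesis by (simp only: complex_cnj_complex_of_real of_real_mult)
qed

lemma braket_vz: "braket (vz N A) (vz N B) = fip N A B / of_nat N"
proof -
  let ?c = "complex_of_real (1 / sqrt (real N))"
  have "braket (vz N A) (vz N B) = (\<Sum>j<N*N. cnj (A $$ (j mod N, j div N)) * B $$ (j mod N, j div N) * (cnj ?c * ?c))"
    unfolding braket_def by (intro sum.cong) (auto simp: vz_def)
  also have "\<dots> = (\<Sum>x<N. \<Sum>y<N. cnj (A $$ (y, x)) * B $$ (y, x) * (cnj ?c * ?c))"
    by (subst sum_split_mult) (intro sum.cong refl, simp add: divmod_simps)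
  also have "\<dots> = (\<Sum>y<N. \<Sum>x<N. cnj (A $$ (y, x)) * B $$ (y, x)) * (cnj ?c * ?c)"
    by (subst sum.swap) (simp only: sum_distrib_right)
  finally show ?thesis unfolding cc_real fip_def by simp
qed

lemma mtrace_adj: assumes "X \<in> carrier_mat N N" shows "mtrace (adj X * X) = fip N X X"
proof -
  have "mtrace (adj X * X) = (\<Sum>i<N. \<Sum>l<N. cnj (X $$ (l,i)) * X $$ (l,i))"
    using assms unfolding mtrace_def
    by (intro sum.cong) (auto simp: adj_def scalar_prod_def atLeast0LessThan intro!: sum.cong)
  also have "\<dots> = fip N X X" unfolding fip_def by (rule sum.swap)
  finally show ?thesis .
qed

lemma mtrace_fip1: assumes "X \<in> carrier_mat N N" shows "mtrace X = fip N (1\<^sub>m N) X"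
proof -
  have "(\<Sum>j<N. cnj (1\<^sub>m N $$ (i,j)) * X $$ (i,j)) = X $$ (i,i)" if i: "i < N" for i
  proof -
    have "(\<Sum>j<N. cnj (1\<^sub>m N $$ (i,j)) * X $$ (i,j)) = (\<Sum>j<N. if i = j then X $$ (i,j) else 0)"
      using i by (intro sum.cong) auto
    thus ?thesis using i by simp
  qed
  thus ?thesis using assms unfolding mtrace_def fip_def by (auto intro: sum.cong)
qed

lemma pauli_mat_carrier[simp]: "pauli_mat P \<in> carrier_mat (2 ^ length P) (2 ^ length P)"
  by (simp add: pauli_mat_def Let_def)
lemma pauli_mat_dims[simp]: "dim_row (pauli_mat P) = 2 ^ length P" "dim_col (pauli_mat P) = 2 ^ length P"
  by (simp_all add: pauli_mat_def Let_def)

lemma pauli_mat_index: "x < 2 ^ length ps \<Longrightarrow> y < 2 ^ length ps \<Longrightarrow>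
  pauli_mat ps $$ (x,y) = (\<Prod>i<length ps. pauli_entry (ps ! i) (bit_at (length ps) i x) (bit_at (length ps) i y))"
  by (simp add: pauli_mat_def Let_def)

lemma bit_at_1: "a < 2 \<Longrightarrow> bit_at (Suc 0) 0 a = a" by (simp add: bit_at_def)

lemma pauli_mat_Nil: "pauli_mat [] = 1\<^sub>m 1"
  by (rule eq_matI) (auto simp: pauli_mat_def)

lemma pauli_mat_single: "a < 2 \<Longrightarrow> b < 2 \<Longrightarrow> pauli_mat [p] $$ (a,b) = pauli_entry p a b"
  by (simp add: pauli_mat_def bit_at_def)

lemma bit_mod_lemma: fixes x e m :: nat assumes "e < m"
  shows "(x mod 2^m) div 2^e mod 2 = x div 2^e mod 2"
proof -
  have "(x mod 2^m) div 2^e mod 2 = take_bit 1 (drop_bit e (take_bit m x))"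
    by (simp add: take_bit_eq_mod drop_bit_eq_div)
  also have "\<dots> = take_bit 1 (drop_bit e x)"
    using assms by (simp add: drop_bit_take_bit take_bit_take_bit min_def)
  finally show ?thesis by (simp add: take_bit_eq_mod drop_bit_eq_div)
qed

lemma bit_at_0: fixes x m :: nat assumes "x < 2^Suc m" shows "bit_at (Suc m) 0 x = x div 2^m"
proof -
  have "x div 2^m < 2" using assms by (simp add: less_mult_imp_div_less mult.commute)
  thus ?thesis by (simp add: bit_at_def)
qed

lemma bit_at_Suc: fixes x m i :: nat assumes "i < m" shows "bit_at (Suc m) (Suc i) x = bit_at m i (x mod 2^m)"
  using assms bit_mod_lemma[of "m - 1 - i" m x] by (simp add: bit_at_def)

lemma pauli_mat_Cons: "pauli_mat (p # ps) = kron (pauli_mat [p]) (pauli_mat ps)"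
proof (rule eq_matI)
  let ?m = "length ps"
  fix x y assume "x < dim_row (kron (pauli_mat [p]) (pauli_mat ps))" "y < dim_col (kron (pauli_mat [p]) (pauli_mat ps))"
  hence x: "x < 2^Suc ?m" and y: "y < 2^Suc ?m" by (simp_all add: kron_def)
  have xd: "x div 2^?m < 2" using x by (simp add: less_mult_imp_div_less mult.commute)
  have yd: "y div 2^?m < 2" using y by (simp add: less_mult_imp_div_less mult.commute)
  have "pauli_mat (p # ps) $$ (x,y) = (\<Prod>i<Suc ?m. pauli_entry ((p#ps) ! i) (bit_at (Suc ?m) i x) (bit_at (Suc ?m) i y))"
    using x y by (simp add: pauli_mat_def)
  also have "\<dots> = pauli_entry p (x div 2^?m) (y div 2^?m) * (\<Prod>i<?m. pauli_entry (ps ! i) (bit_at ?m i (x mod 2^?m)) (bit_at ?m i (y mod 2^?m)))"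
    by (simp only: prod.lessThan_Suc_shift) (simp add: bit_at_0[OF x] bit_at_0[OF y] bit_at_Suc)
  also have "\<dots> = kron (pauli_mat [p]) (pauli_mat ps) $$ (x,y)"
    using x y xd yd by (simp add: kron_def pauli_mat_index bit_at_1)
  finally show "pauli_mat (p # ps) $$ (x,y) = kron (pauli_mat [p]) (pauli_mat ps) $$ (x,y)" .
qed (simp_all add: kron_def)



lemma kron_index: assumes "A \<in> carrier_mat a a" "B \<in> carrier_mat b b"
  "i1 < a" "i2 < b" "j1 < a" "j2 < b"
  shows "kron A B $$ (i1*b+i2, j1*b+j2) = A $$ (i1,j1) * B $$ (i2,j2)"
  using assms idx_lt[of i1 a i2 b] idx_lt[of j1 a j2 b] by (simp add: kron_def divmod_simps)

lemma fip_kron: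
  assumes A: "A \<in> carrier_mat a a" and C: "C \<in> carrier_mat a a"
    and B: "B \<in> carrier_mat b b" and D: "D \<in> carrier_mat b b"
  shows "fip (a*b) (kron A B) (kron C D) = fip a A C * fip b B D"
proof -
  have "fip (a*b) (kron A B) (kron C D) =
     (\<Sum>i1<a. \<Sum>i2<b. \<Sum>j1<a. \<Sum>j2<b. cnj (kron A B $$ (i1*b+i2, j1*b+j2)) * kron C D $$ (i1*b+i2, j1*b+j2))"
    unfolding fip_def by (simp add: sum_split_mult)
  also have "\<dots> = (\<Sum>i1<a. \<Sum>i2<b. \<Sum>j1<a. \<Sum>j2<b. (cnj (A $$ (i1,j1)) * C $$ (i1,j1)) * (cnj (B $$ (i2,j2)) * D $$ (i2,j2)))"
    using A B C D by (intro sum.cong refl) (simp add: kron_index)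
  also have "\<dots> = (\<Sum>i1<a. \<Sum>j1<a. \<Sum>i2<b. \<Sum>j2<b. (cnj (A $$ (i1,j1)) * C $$ (i1,j1)) * (cnj (B $$ (i2,j2)) * D $$ (i2,j2)))"
    by (rule sum.cong[OF refl], rule sum.swap)
  also have "\<dots> = (\<Sum>i1<a. \<Sum>j1<a. (cnj (A $$ (i1,j1)) * C $$ (i1,j1)) * fip b B D)"
    unfolding fip_def by (simp add: sum_distrib_left)
  also have "\<dots> = fip a A C * fip b B D"
    unfolding fip_def[of a] by (simp add: sum_distrib_right)
  finally show ?thesis .
qed

lemma fip_single: "fip 2 (pauli_mat [p]) (pauli_mat [q]) = (if p = q then 2 else 0)"
proof -
  have "fip 2 (pauli_mat [p]) (pauli_mat [q]) = (\<Sum>i<2. \<Sum>j<2. cnj (pauli_entry p i j) * pauli_entry q i j)"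
    unfolding fip_def by (intro sum.cong refl) (simp add: pauli_mat_single)
  also have "\<dots> = (if p = q then 2 else 0)"
    by (cases p; cases q) (simp_all add: numeral_2_eq_2 lessThan_Suc)
  finally show ?thesis .
qed

lemma fip_pauli: "length Q = length P \<Longrightarrow>
  fip (2 ^ length P) (pauli_mat P) (pauli_mat Q) = (if P = Q then 2 ^ length P else 0)"
proof (induction P arbitrary: Q)
  case Nil
  then show ?case by (simp add: pauli_mat_Nil fip_def)
next
  case (Cons p ps)
  then obtain q qs where Q: "Q = q # qs" and l: "length qs = length ps" by (cases Q) auto
  have "fip (2 ^ length (p # ps)) (pauli_mat (p # ps)) (pauli_mat Q)
      = fip (2 * 2 ^ length ps) (kron (pauli_mat [p]) (pauli_mat ps)) (kron (pauli_mat [q]) (pauli_mat qs))"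
    by (simp add: Q pauli_mat_Cons[of p ps] pauli_mat_Cons[of q qs])
  also have "\<dots> = fip 2 (pauli_mat [p]) (pauli_mat [q]) * fip (2 ^ length ps) (pauli_mat ps) (pauli_mat qs)"
    by (rule fip_kron) (use l pauli_mat_carrier[of "[p]"] pauli_mat_carrier[of "[q]"] pauli_mat_carrier[of ps] pauli_mat_carrier[of qs] in auto)
  also have "\<dots> = (if p # ps = Q then 2 ^ length (p # ps) else 0)"
    using Cons.IH[OF l] by (simp add: fip_single Q)
  finally show ?case .
qed

lemma kron_one: "0 < b \<Longrightarrow> kron (1\<^sub>m a) (1\<^sub>m b) = 1\<^sub>m (a*b)"
proof (rule eq_matI)
  fix i j assume b: "0 < b" and i: "i < dim_row (1\<^sub>m (a*b))" and j: "j < dim_col (1\<^sub>m (a*b))"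
  have "i div b < a" "j div b < a" using i j by (simp_all add: less_mult_imp_div_less)
  moreover have "(i div b = j div b \<and> i mod b = j mod b) = (i = j)"
    by (metis div_mult_mod_eq)
  ultimately show "kron (1\<^sub>m a) (1\<^sub>m b) $$ (i, j) = 1\<^sub>m (a*b) $$ (i, j)"
    using i j b by (auto simp: kron_def)
qed (auto simp: kron_def)

lemma pauli_I: "pauli_mat (replicate m PI) = 1\<^sub>m (2^m)"
proof (induction m)
  case 0 then show ?case by (simp add: pauli_mat_Nil)
next
  case (Suc m)
  have "pauli_mat [PI] = 1\<^sub>m 2"
    by (rule eq_matI) (auto simp: pauli_mat_single)
  then show ?case using Suc by (simp add: pauli_mat_Cons[of _ "replicate m PI"] kron_one)
qed

lemma pe_cnj: "a < 2 \<Longrightarrow> b < 2 \<Longrightarrow> cnj (pauli_entry p b a) = pauli_entry p a b"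
  by (cases p) (auto simp: less_2_cases_iff)

lemma pauli_herm: "adj (pauli_mat P) = pauli_mat P"
proof (rule eq_matI)
  fix i j assume i: "i < dim_row (pauli_mat P)" and j: "j < dim_col (pauli_mat P)"
  show "adj (pauli_mat P) $$ (i, j) = pauli_mat P $$ (i, j)"
    using i j by (simp add: adj_def pauli_mat_index cnj_prod pe_cnj bit_at_def)
qed (auto simp: adj_def)



definition onb :: "nat \<Rightarrow> ('a \<Rightarrow> complex vec) \<Rightarrow> 'a set \<Rightarrow> bool" where
  "onb d e S \<longleftrightarrow> finite S \<and> (\<forall>P\<in>S. dim_vec (e P) = d) \<and>
     (\<forall>P\<in>S. \<forall>Q\<in>S. braket (e P) (e Q) = (if P = Q then 1 else 0))"

definition projS :: "nat \<Rightarrow> ('a \<Rightarrow> complex vec) \<Rightarrow> 'a set \<Rightarrow> complex mat" where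
  "projS d e S = mat d d (\<lambda>(i,j). \<Sum>P\<in>S. e P $ i * cnj (e P $ j))"

definition spanS :: "nat \<Rightarrow> ('a \<Rightarrow> complex vec) \<Rightarrow> 'a set \<Rightarrow> complex vec set" where
  "spanS d e S = {vec d (\<lambda>j. \<Sum>P\<in>S. c P * e P $ j) | c. True}"

definition rng :: "nat \<Rightarrow> complex mat \<Rightarrow> complex vec set" where
  "rng d X = {X *\<^sub>v v | v. v \<in> carrier_vec d}"

lemma braket_lin: assumes "dim_vec u = d"
  shows "braket u (vec d (\<lambda>j. \<Sum>P\<in>S. c P * f P $ j)) = (\<Sum>P\<in>S. c P * braket u (f P))"
proof -
  have "braket u (vec d (\<lambda>j. \<Sum>P\<in>S. c P * f P $ j)) = (\<Sum>i<d. \<Sum>P\<in>S. c P * (cnj (u $ i) * f P $ i))"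
    unfolding braket_def using assms by (intro sum.cong) (auto simp: sum_distrib_left ac_simps)
  also have "\<dots> = (\<Sum>P\<in>S. c P * braket u (f P))"
    unfolding braket_def using assms by (subst sum.swap) (simp add: sum_distrib_left)
  finally show ?thesis .
qed

lemma projS_carrier[simp]: "projS d e S \<in> carrier_mat d d" by (simp add: projS_def)
lemma projS_dims[simp]: "dim_row (projS d e S) = d" "dim_col (projS d e S) = d" by (simp_all add: projS_def)

lemma projS_apply: assumes "onb d e S" "v \<in> carrier_vec d"
  shows "projS d e S *\<^sub>v v = vec d (\<lambda>i. \<Sum>P\<in>S. braket (e P) v * e P $ i)"
proof (rule eq_vecI)
  fix i assume "i < dim_vec (vec d (\<lambda>i. \<Sum>P\<in>S. braket (e P) v * e P $ i))"
  hence i: "i < d" by simp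
  have "(projS d e S *\<^sub>v v) $ i = (\<Sum>j<d. (\<Sum>P\<in>S. e P $ i * cnj (e P $ j)) * v $ j)"
    using i assms(2) by (auto simp: projS_def scalar_prod_def atLeast0LessThan intro!: sum.cong)
  also have "\<dots> = (\<Sum>j<d. \<Sum>P\<in>S. e P $ i * (cnj (e P $ j) * v $ j))"
    by (simp only: sum_distrib_right mult.assoc)
  also have "\<dots> = (\<Sum>P\<in>S. \<Sum>j<d. e P $ i * (cnj (e P $ j) * v $ j))"
    by (rule sum.swap)
  also have "\<dots> = (\<Sum>P\<in>S. braket (e P) v * e P $ i)"
    using assms(1) unfolding onb_def braket_def by (intro sum.cong refl) (simp add: sum_distrib_left ac_simps)
  finally show "(projS d e S *\<^sub>v v) $ i = vec d (\<lambda>i. \<Sum>P\<in>S. braket (e P) v * e P $ i) $ i"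
    using i by simp
qed (use assms in simp)

lemma spanS_carrier: "w \<in> spanS d e S \<Longrightarrow> w \<in> carrier_vec d"
  by (auto simp: spanS_def)

lemma projS_fix: assumes "onb d e S" "w \<in> spanS d e S"
  shows "projS d e S *\<^sub>v w = w"
proof -
  obtain c where w: "w = vec d (\<lambda>j. \<Sum>P\<in>S. c P * e P $ j)" using assms(2) by (auto simp: spanS_def)
  have fin: "finite S" and dims: "\<And>P. P \<in> S \<Longrightarrow> dim_vec (e P) = d"
    and orth: "\<And>P Q. P \<in> S \<Longrightarrow> Q \<in> S \<Longrightarrow> braket (e P) (e Q) = (if P = Q then 1 else 0)"
    using assms(1) by (auto simp: onb_def)
  have br: "braket (e Q) w = c Q" if Q: "Q \<in> S" for Q
  proof -
    have "braket (e Q) w = (\<Sum>P\<in>S. c P * braket (e Q) (e P))"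
      unfolding w by (rule braket_lin) (use dims Q in auto)
    also have "\<dots> = (\<Sum>P\<in>S. if P = Q then c P else 0)"
      using Q orth by (intro sum.cong) auto
    also have "\<dots> = c Q" using fin Q by (simp add: sum.delta')
    finally show ?thesis .
  qed
  have "projS d e S *\<^sub>v w = vec d (\<lambda>i. \<Sum>P\<in>S. braket (e P) w * e P $ i)"
    using assms spanS_carrier by (intro projS_apply) auto
  also have "\<dots> = w" unfolding w by (intro eq_vecI) (auto simp: br[unfolded w] intro!: sum.cong)
  finally show ?thesis .
qed

lemma projS_range: assumes "onb d e S" shows "rng d (projS d e S) = spanS d e S"
proof
  show "rng d (projS d e S) \<subseteq> spanS d e S"
  proof
    fix w assume "w \<in> rng d (projS d e S)"
    then obtain v where v: "v \<in> carrier_vec d" "w = projS d e S *\<^sub>v v" by (auto simp: rng_def)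
    show "w \<in> spanS d e S" unfolding v(2) projS_apply[OF assms v(1)] spanS_def
      by (rule CollectI, rule exI[of _ "\<lambda>P. braket (e P) v"]) simp
  qed
next
  show "spanS d e S \<subseteq> rng d (projS d e S)"
  proof
    fix w assume w: "w \<in> spanS d e S"
    have "w = projS d e S *\<^sub>v w \<and> w \<in> carrier_vec d"
      using projS_fix[OF assms w] spanS_carrier[OF w] by simp
    thus "w \<in> rng d (projS d e S)" unfolding rng_def by blast
  qed
qed

lemma col_spanS: assumes "onb d e S" "j < d" shows "col (projS d e S) j \<in> spanS d e S"
proof -
  have "col (projS d e S) j = vec d (\<lambda>i. \<Sum>P\<in>S. cnj (e P $ j) * e P $ i)"
    using assms by (intro eq_vecI) (auto simp: projS_def ac_simps)
  thus ?thesis unfolding spanS_def by auto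
qed

lemma projS_idem: assumes "onb d e S" shows "projS d e S * projS d e S = projS d e S"
proof (rule mat_col_eqI)
  fix j assume "j < dim_col (projS d e S)"
  hence j: "j < d" by (simp add: projS_def)
  show "col (projS d e S * projS d e S) j = col (projS d e S) j"
    using j by (simp add: col_mult2[of _ d d _ d] projS_fix[OF assms col_spanS[OF assms j]])
qed auto

lemma projS_adj: "adj (projS d e S) = projS d e S"
proof (rule eq_matI)
  fix i j assume "i < dim_row (projS d e S)" "j < dim_col (projS d e S)"
  hence i: "i < d" and j: "j < d" by auto
  show "adj (projS d e S) $$ (i, j) = projS d e S $$ (i, j)"
    using i j unfolding adj_def projS_def by (simp add: cnj_sum mult.commute)
qed (auto simp: adj_def)

lemma adj_mult: assumes "A \<in> carrier_mat a b" "B \<in> carrier_mat b c"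
  shows "adj (A * B) = adj B * adj A"
proof (rule eq_matI)
  fix i j assume "i < dim_row (adj B * adj A)" "j < dim_col (adj B * adj A)"
  hence i: "i < c" and j: "j < a" using assms by (auto simp: adj_def)
  have "adj (A * B) $$ (i, j) = cnj (\<Sum>l\<in>{0..<b}. A $$ (j,l) * B $$ (l,i))"
    using assms i j by (simp add: adj_def scalar_prod_def)
  also have "\<dots> = (\<Sum>l\<in>{0..<b}. cnj (B $$ (l,i)) * cnj (A $$ (j,l)))"
    by (simp add: cnj_sum mult.commute)
  also have "\<dots> = (adj B * adj A) $$ (i, j)"
    using assms i j by (simp add: adj_def scalar_prod_def)
  finally show "adj (A * B) $$ (i, j) = (adj B * adj A) $$ (i, j)" .
qed (use assms in \<open>auto simp: adj_def\<close>)

lemma col_unit: fixes Y :: "complex mat" assumes "Y \<in> carrier_mat d d" "j < d" shows "col Y j = Y *\<^sub>v unit_vec d j"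
proof (rule eq_vecI)
  fix i assume "i < dim_vec (Y *\<^sub>v unit_vec d j)"
  hence i: "i < d" using assms by simp
  have "scalar_prod (row Y i) (unit_vec d j) = row Y i $ j" using assms(2) by (rule scalar_prod_right_unit)
  thus "col Y j $ i = (Y *\<^sub>v unit_vec d j) $ i" using assms i by simp
qed (use assms in simp)

lemma absorb: assumes X: "X \<in> carrier_mat d d" and Y: "Y \<in> carrier_mat d d"
  and idem: "X * X = X" and sub: "rng d Y \<subseteq> rng d X"
  shows "X * Y = Y"
proof (rule mat_col_eqI)
  fix j assume "j < dim_col Y"
  hence j: "j < d" using Y by simp
  have "col Y j \<in> rng d Y" unfolding rng_def using col_unit[OF Y j] by auto
  then obtain w where w: "w \<in> carrier_vec d" "col Y j = X *\<^sub>v w" using sub by (auto simp: rng_def)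
  have "col (X * Y) j = X *\<^sub>v col Y j" by (rule col_mult2[OF X Y j])
  also have "\<dots> = (X * X) *\<^sub>v w" using w X by (simp add: assoc_mult_mat_vec)
  also have "\<dots> = col Y j" using idem w by simp
  finally show "col (X * Y) j = col Y j" .
qed (use X Y in auto)

lemma proj_unique: assumes X: "X \<in> carrier_mat d d" and Y: "Y \<in> carrier_mat d d"
  and iX: "X * X = X" and iY: "Y * Y = Y" and aX: "adj X = X" and aY: "adj Y = Y"
  and r: "rng d X = rng d Y"
  shows "X = Y"
proof -
  have "X * Y = Y" using absorb[OF X Y iX] r by auto
  have YX: "Y * X = X" using absorb[OF Y X iY] r by auto
  have "X = adj (Y * X)" using YX aX by simp
  also have "\<dots> = adj X * adj Y" using X Y by (simp add: adj_mult)
  also have "\<dots> = Y" using aX aY \<open>X * Y = Y\<close> by simp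
  finally show ?thesis .
qed

lemma orth_proj_eq: assumes "onb d e S" shows "orth_proj d (spanS d e S) = projS d e S"
  unfolding orth_proj_def
proof (rule the_equality)
  show "projS d e S \<in> carrier_mat d d \<and> projS d e S * projS d e S = projS d e S \<and>
    adj (projS d e S) = projS d e S \<and> {projS d e S *\<^sub>v v |v. v \<in> carrier_vec d} = spanS d e S"
    using projS_idem[OF assms] projS_adj projS_range[OF assms] by (simp add: rng_def)
next
  fix M assume M: "M \<in> carrier_mat d d \<and> M * M = M \<and> adj M = M \<and> {M *\<^sub>v v |v. v \<in> carrier_vec d} = spanS d e S"
  show "M = projS d e S"
    by (rule proj_unique[of M d "projS d e S"])
      (use M projS_idem[OF assms] projS_adj projS_range[OF assms] in \<open>auto simp: rng_def\<close>)
qed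



lemma vnorm_L2: "vnorm v = L2_set (\<lambda>i. cmod (v $ i)) {..<dim_vec v}"
  by (simp add: vnorm_def L2_set_def)

lemma vnorm_nonneg: "0 \<le> vnorm v" by (simp add: vnorm_def sum_nonneg)

lemma vnorm_sq: "(vnorm v)\<^sup>2 = (\<Sum>i<dim_vec v. (cmod (v $ i))\<^sup>2)"
  unfolding vnorm_def by (simp add: sum_nonneg)

lemma braket_self: "braket v v = complex_of_real ((vnorm v)\<^sup>2)"
proof -
  have "cnj z * z = complex_of_real ((cmod z)\<^sup>2)" for z
    using complex_norm_square[of z] by (simp add: mult.commute)
  thus ?thesis unfolding braket_def vnorm_sq by simp
qed

lemma braket_CS: assumes "dim_vec u = dim_vec v"
  shows "cmod (braket u v) \<le> vnorm u * vnorm v"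
proof -
  have "cmod (braket u v) \<le> (\<Sum>i<dim_vec u. cmod (cnj (u $ i) * v $ i))"
    unfolding braket_def by (rule norm_sum)
  also have "\<dots> = (\<Sum>i<dim_vec u. \<bar>cmod (u $ i)\<bar> * \<bar>cmod (v $ i)\<bar>)"
    by (simp add: norm_mult)
  also have "\<dots> \<le> L2_set (\<lambda>i. cmod (u $ i)) {..<dim_vec u} * L2_set (\<lambda>i. cmod (v $ i)) {..<dim_vec u}"
    by (rule L2_set_mult_ineq)
  also have "\<dots> = vnorm u * vnorm v" using assms by (simp add: vnorm_L2)
  finally show ?thesis .
qed

lemma herm_braket: assumes X: "X \<in> carrier_mat d d" and aX: "adj X = X"
  and u: "dim_vec u = d" and v: "dim_vec v = d"
  shows "braket u (X *\<^sub>v v) = braket (X *\<^sub>v u) v"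
proof -
  have ent: "cnj (X $$ (j,i)) = X $$ (i,j)" if "i < d" "j < d" for i j
  proof -
    have "adj X $$ (i,j) = cnj (X $$ (j,i))" using X that by (simp add: adj_def)
    thus ?thesis using aX by simp
  qed
  have "braket u (X *\<^sub>v v) = (\<Sum>i<d. \<Sum>j<d. cnj (u $ i) * (X $$ (i,j) * v $ j))"
    unfolding braket_def using X u v
    by (intro sum.cong) (auto simp: scalar_prod_def atLeast0LessThan sum_distrib_left)
  also have "\<dots> = (\<Sum>j<d. \<Sum>i<d. cnj (u $ i) * (X $$ (i,j) * v $ j))" by (rule sum.swap)
  also have "\<dots> = braket (X *\<^sub>v u) v"
  proof -
    have Xu: "(X *\<^sub>v u) $ j = (\<Sum>i<d. X $$ (j,i) * u $ i)" if "j < d" for j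
      using X u that by (simp add: scalar_prod_def atLeast0LessThan)
    have c: "cnj (\<Sum>i<d. X $$ (j,i) * u $ i) * v $ j = (\<Sum>i<d. cnj (u $ i) * (X $$ (i,j) * v $ j))"
      if j: "j < d" for j
    proof -
      have "cnj (\<Sum>i<d. X $$ (j,i) * u $ i) * v $ j = (\<Sum>i<d. cnj (X $$ (j,i)) * cnj (u $ i) * v $ j)"
        by (simp add: cnj_sum sum_distrib_right)
      also have "\<dots> = (\<Sum>i<d. cnj (u $ i) * (X $$ (i,j) * v $ j))"
        by (rule sum.cong) (use ent j in auto)
      finally show ?thesis .
    qed
    show ?thesis unfolding braket_def using X c Xu by (auto intro!: sum.cong)
  qed
  finally show ?thesis .
qed

lemma herm_contr: assumes X: "X \<in> carrier_mat d d" and iX: "X * X = X" and aX: "adj X = X"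
  and v: "v \<in> carrier_vec d"
  shows "vnorm (X *\<^sub>v v) \<le> vnorm v"
proof -
  let ?p = "X *\<^sub>v v"
  have pd: "dim_vec ?p = d" using X by simp
  have "complex_of_real ((vnorm ?p)\<^sup>2) = braket ?p ?p" by (simp add: braket_self)
  also have "\<dots> = braket v (X *\<^sub>v ?p)"
    using herm_braket[OF X aX, of v ?p] v pd by simp
  also have "X *\<^sub>v ?p = ?p" using X v iX by (simp add: assoc_mult_mat_vec[symmetric])
  finally have eq: "complex_of_real ((vnorm ?p)\<^sup>2) = braket v ?p" .
  have "(vnorm ?p)\<^sup>2 = cmod (braket v ?p)" unfolding eq[symmetric] norm_of_real by simp
  also have "\<dots> \<le> vnorm v * vnorm ?p" using v pd by (intro braket_CS) simp
  finally have "vnorm ?p * vnorm ?p \<le> vnorm v * vnorm ?p" by (simp add: power2_eq_square)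
  thus ?thesis using vnorm_nonneg[of ?p] vnorm_nonneg[of v]
    by (cases "vnorm ?p = 0") (auto simp: mult_le_cancel_right)
qed

lemma vnorm_smult: "vnorm (c \<cdot>\<^sub>v v) = cmod c * vnorm v"
proof -
  have "(\<Sum>i<dim_vec v. (cmod ((c \<cdot>\<^sub>v v) $ i))\<^sup>2) = (\<Sum>i<dim_vec v. (cmod c)\<^sup>2 * (cmod (v $ i))\<^sup>2)"
    by (intro sum.cong) (auto simp: norm_mult power_mult_distrib)
  hence "vnorm (c \<cdot>\<^sub>v v) = sqrt ((cmod c)\<^sup>2 * (\<Sum>i<dim_vec v. (cmod (v $ i))\<^sup>2))"
    by (simp add: vnorm_def sum_distrib_left)
  thus ?thesis by (simp add: real_sqrt_mult vnorm_def)
qed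

lemma spec_contr: assumes H: "H \<in> carrier_mat N N" and sn: "spec_norm H \<le> 1"
  and u: "u \<in> carrier_vec N"
  shows "vnorm (H *\<^sub>v u) \<le> vnorm u"
proof -
  let ?S = "{vnorm (H *\<^sub>v v) | v. v \<in> carrier_vec (dim_col H) \<and> vnorm v \<le> 1}"
  let ?C = "\<Sum>i<N. \<Sum>j<N. cmod (H $$ (i,j))"
  have bnd: "vnorm (H *\<^sub>v v) \<le> ?C" if v: "v \<in> carrier_vec N" "vnorm v \<le> 1" for v
  proof -
    have vj: "cmod (v $ j) \<le> 1" if "j < N" for j
    proof -
      have "cmod (v $ j) \<le> vnorm v" unfolding vnorm_L2 using v that by (intro member_le_L2_set) auto
      thus ?thesis using v by simp
    qed
    have dN: "dim_vec (H *\<^sub>v v) = N" using H by simp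
    have "vnorm (H *\<^sub>v v) \<le> (\<Sum>i<N. cmod ((H *\<^sub>v v) $ i))"
      unfolding vnorm_L2 dN by (intro L2_set_le_sum) auto
    also have "\<dots> \<le> (\<Sum>i<N. \<Sum>j<N. cmod (H $$ (i,j)))"
    proof (rule sum_mono)
      fix i assume i: "i \<in> {..<N}"
      have "cmod ((H *\<^sub>v v) $ i) = cmod (\<Sum>j<N. H $$ (i,j) * v $ j)"
        using H v i by (auto simp: scalar_prod_def atLeast0LessThan intro!: arg_cong[where f=cmod] sum.cong)
      also have "\<dots> \<le> (\<Sum>j<N. cmod (H $$ (i,j) * v $ j))" by (rule norm_sum)
      also have "\<dots> \<le> (\<Sum>j<N. cmod (H $$ (i,j)))"
      proof (rule sum_mono)
        fix j assume "j \<in> {..<N}"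
        thus "cmod (H $$ (i,j) * v $ j) \<le> cmod (H $$ (i,j))"
          using vj[of j] by (simp add: norm_mult mult_left_le)
      qed
      finally show "cmod ((H *\<^sub>v v) $ i) \<le> (\<Sum>j<N. cmod (H $$ (i,j)))" .
    qed
    finally show ?thesis .
  qed
  have bdd: "bdd_above ?S" using bnd H by (auto intro!: bdd_aboveI[of _ ?C])
  have le1: "vnorm (H *\<^sub>v v) \<le> 1" if v: "v \<in> carrier_vec N" "vnorm v \<le> 1" for v
  proof -
    have "vnorm (H *\<^sub>v v) \<in> ?S" using v H by auto
    hence "vnorm (H *\<^sub>v v) \<le> Sup ?S" using bdd by (rule cSup_upper)
    also have "\<dots> = spec_norm H" by (simp add: spec_norm_def)
    finally show ?thesis using sn by simp
  qed
  show ?thesis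
  proof (cases "vnorm u = 0")
    case True
    have "cmod (u $ j) \<le> vnorm u" if "j < N" for j
      unfolding vnorm_L2 using u that by (intro member_le_L2_set) auto
    hence "u $ j = 0" if "j < N" for j using True that by fastforce
    hence "u = 0\<^sub>v N" using u by (intro eq_vecI) auto
    hence "H *\<^sub>v u = 0\<^sub>v N" using H by (intro eq_vecI) (auto simp: scalar_prod_def)
    hence "vnorm (H *\<^sub>v u) = 0" by (simp add: vnorm_def)
    thus ?thesis using True by simp
  next
    case False
    define r where "r = vnorm u"
    have r: "r > 0" using False vnorm_nonneg[of u] unfolding r_def by simp
    let ?c = "complex_of_real (1 / r)"
    have "vnorm (?c \<cdot>\<^sub>v u) = 1" using r by (simp add: vnorm_smult r_def norm_divide)
    hence "vnorm (H *\<^sub>v (?c \<cdot>\<^sub>v u)) \<le> 1" using u by (intro le1) auto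
    also have "H *\<^sub>v (?c \<cdot>\<^sub>v u) = ?c \<cdot>\<^sub>v (H *\<^sub>v u)" using H u by (rule mult_mat_vec)
    finally have "(1 / r) * vnorm (H *\<^sub>v u) \<le> 1" using r by (simp add: vnorm_smult norm_divide)
    thus ?thesis using r unfolding r_def by (simp add: field_simps)
  qed
qed



lemma kron_blk: assumes H: "H \<in> carrier_mat N N" and v: "v \<in> carrier_vec (N*N)"
  and x: "x < N" and y: "y < N"
  shows "(kron (1\<^sub>m N) H *\<^sub>v v) $ (x*N+y) = (H *\<^sub>v vec N (\<lambda>y'. v $ (x*N+y'))) $ y"
proof -
  have idx: "x*N+y < N*N" using idx_lt[OF x y] .
  have "(kron (1\<^sub>m N) H *\<^sub>v v) $ (x*N+y) = (\<Sum>l<N*N. kron (1\<^sub>m N) H $$ (x*N+y,l) * v $ l)"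
    using idx H v by (auto simp: kron_def scalar_prod_def atLeast0LessThan intro!: sum.cong)
  also have "\<dots> = (\<Sum>x'<N. \<Sum>y'<N. kron (1\<^sub>m N) H $$ (x*N+y,x'*N+y') * v $ (x'*N+y'))"
    by (rule sum_split_mult)
  also have "\<dots> = (\<Sum>x'<N. \<Sum>y'<N. (if x = x' then H $$ (y, y') * v $ (x'*N+y') else 0))"
    using H x y by (intro sum.cong refl) (simp add: kron_index[of _ N _ N])
  also have "\<dots> = (\<Sum>y'<N. H $$ (y, y') * v $ (x*N+y'))"
    using x by (simp add: sum.swap[of _ "{..<N}" "{..<N}"])
  also have "\<dots> = (H *\<^sub>v vec N (\<lambda>y'. v $ (x*N+y'))) $ y"
    using H y by (auto simp: scalar_prod_def atLeast0LessThan intro!: sum.cong)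
  finally show ?thesis .
qed

lemma kron_contr: assumes H: "H \<in> carrier_mat N N"
  and hc: "\<And>u. u \<in> carrier_vec N \<Longrightarrow> vnorm (H *\<^sub>v u) \<le> vnorm u"
  and v: "v \<in> carrier_vec (N*N)"
  shows "vnorm (kron (1\<^sub>m N) H *\<^sub>v v) \<le> vnorm v"
proof -
  let ?K = "kron (1\<^sub>m N) H"
  define b where "b x = vec N (\<lambda>y. v $ (x*N+y))" for x
  have dK: "dim_vec (?K *\<^sub>v v) = N*N" using H by (simp add: kron_def)
  have "(vnorm (?K *\<^sub>v v))\<^sup>2 = (\<Sum>j<N*N. (cmod ((?K *\<^sub>v v) $ j))\<^sup>2)" by (simp only: vnorm_sq dK)
  also have "\<dots> = (\<Sum>x<N. \<Sum>y<N. (cmod ((H *\<^sub>v b x) $ y))\<^sup>2)"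
    by (subst sum_split_mult) (intro sum.cong refl, simp add: kron_blk[OF H v] b_def)
  also have "\<dots> = (\<Sum>x<N. (vnorm (H *\<^sub>v b x))\<^sup>2)"
    using H by (simp add: vnorm_sq)
  also have "\<dots> \<le> (\<Sum>x<N. (vnorm (b x))\<^sup>2)"
    by (intro sum_mono power_mono hc vnorm_nonneg) (simp add: b_def)
  also have "\<dots> = (\<Sum>x<N. \<Sum>y<N. (cmod (v $ (x*N+y)))\<^sup>2)"
    by (simp add: vnorm_sq b_def)
  also have "\<dots> = (vnorm v)\<^sup>2"
    using v by (simp add: vnorm_sq sum_split_mult)
  finally show ?thesis using vnorm_nonneg by (rule power2_le_imp_le)
qed

lemma univ_pauli: "(UNIV :: pauli set) = {PI, PX, PY, PZ}"
proof -
  have "x \<in> {PI, PX, PY, PZ}" for x :: pauli by (cases x) auto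
  thus ?thesis by auto
qed

lemma finite_paulis: "finite (paulis n)"
proof -
  have "finite (UNIV :: pauli set)" by (simp add: univ_pauli)
  from finite_lists_length_eq[OF this, of n] show ?thesis by (simp add: paulis_def)
qed

lemma sigma_I_vz: "sigma_I n = vz (2^n) (1\<^sub>m (2^n))"
proof (rule eq_vecI)
  fix j assume "j < dim_vec (vz (2^n) (1\<^sub>m (2^n)))"
  hence j: "j < 2^n * 2^n" by simp
  have "j div 2^n < 2^n" using j by (simp add: less_mult_imp_div_less)
  moreover have "j mod 2^n < (2::nat)^n" by simp
  ultimately show "sigma_I n $ j = vz (2^n) (1\<^sub>m (2^n)) $ j"
    using j by (auto simp: sigma_I_def vz_def)
qed (simp add: sigma_I_def)

lemma sigma_vz: assumes "P \<in> paulis n" shows "sigma n P = vz (2^n) (pauli_mat P)"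
proof -
  have c: "pauli_mat P \<in> carrier_mat (2^n) (2^n)" using assms pauli_mat_carrier[of P] by (simp add: paulis_def)
  show ?thesis unfolding sigma_def sigma_I_vz
    using kron_vz[OF c one_carrier_mat] right_mult_one_mat[OF c] by simp
qed

lemma dim_sigma: "P \<in> paulis n \<Longrightarrow> dim_vec (sigma n P) = 2^n * 2^n"
  by (simp add: sigma_vz)

lemma braket_sigma: assumes "P \<in> paulis n" "Q \<in> paulis n"
  shows "braket (sigma n P) (sigma n Q) = (if P = Q then 1 else 0)"
proof -
  have l: "length P = n" "length Q = n" using assms by (auto simp: paulis_def)
  have "braket (sigma n P) (sigma n Q) = fip (2 ^ length P) (pauli_mat P) (pauli_mat Q) / of_nat (2^n)"
    using assms l by (simp add: sigma_vz braket_vz)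
  also have "\<dots> = (if P = Q then 1 else 0)" using l fip_pauli[of Q P] by simp
  finally show ?thesis .
qed

lemma onb_D: "onb (2^n * 2^n) (sigma n) (D_paulis n k)"
proof -
  have sub: "D_paulis n k \<subseteq> paulis n" by (auto simp: D_paulis_def)
  show ?thesis unfolding onb_def
    using finite_subset[OF sub finite_paulis] sub dim_sigma braket_sigma by blast
qed

lemma Pi_D_eq: "Pi_D n k = projS (2^n * 2^n) (sigma n) (D_paulis n k)"
proof -
  have "D_space n k = spanS (2^n * 2^n) (sigma n) (D_paulis n k)"
    by (simp add: D_space_def spanS_def)
  thus ?thesis unfolding Pi_D_def using orth_proj_eq[OF onb_D] by simp
qed

lemma pauli_sum_carrier[simp]: "pauli_sum n \<alpha> S \<in> carrier_mat (2^n) (2^n)"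
  by (simp add: pauli_sum_def)

lemma vz_pauli_sum: assumes S: "S \<subseteq> paulis n"
  shows "vz (2^n) (pauli_sum n \<alpha> S) = vec (2^n * 2^n) (\<lambda>j. \<Sum>P\<in>S. complex_of_real (\<alpha> P) * sigma n P $ j)"
proof (rule eq_vecI)
  fix j assume "j < dim_vec (vec (2^n * 2^n) (\<lambda>j. \<Sum>P\<in>S. complex_of_real (\<alpha> P) * sigma n P $ j))"
  hence j: "j < 2^n * 2^n" by simp
  have jd: "j div 2^n < 2^n" using j by (simp add: less_mult_imp_div_less)
  have jm: "j mod 2^n < (2::nat)^n" by simp
  define c where "c = complex_of_real (1 / sqrt (real ((2::nat)^n)))"
  have sP: "sigma n P $ j = pauli_mat P $$ (j mod 2^n, j div 2^n) * c"
    if "P \<in> S" for P using that S j unfolding c_def by (auto simp: sigma_vz vz_def)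
  have "vz (2^n) (pauli_sum n \<alpha> S) $ j = (\<Sum>P\<in>S. complex_of_real (\<alpha> P) * pauli_mat P $$ (j mod 2^n, j div 2^n)) * c"
    using j jd jm unfolding c_def vz_def pauli_sum_def by simp
  also have "\<dots> = (\<Sum>P\<in>S. complex_of_real (\<alpha> P) * (pauli_mat P $$ (j mod 2^n, j div 2^n) * c))"
    by (simp add: sum_distrib_right mult.assoc)
  also have "\<dots> = (\<Sum>P\<in>S. complex_of_real (\<alpha> P) * sigma n P $ j)"
    by (intro sum.cong refl) (simp add: sP)
  finally show "vz (2^n) (pauli_sum n \<alpha> S) $ j = vec (2^n * 2^n) (\<lambda>j. \<Sum>P\<in>S. complex_of_real (\<alpha> P) * sigma n P $ j) $ j"
    using j by simp
qed simp

lemma coef: assumes Q: "Q \<in> paulis n" and S: "S \<subseteq> paulis n" and fin: "finite S"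
  shows "braket (sigma n Q) (vz (2^n) (pauli_sum n \<alpha> S)) = (if Q \<in> S then complex_of_real (\<alpha> Q) else 0)"
proof -
  have "braket (sigma n Q) (vz (2^n) (pauli_sum n \<alpha> S)) = (\<Sum>P\<in>S. complex_of_real (\<alpha> P) * braket (sigma n Q) (sigma n P))"
    unfolding vz_pauli_sum[OF S] by (rule braket_lin) (use Q dim_sigma in auto)
  also have "\<dots> = (\<Sum>P\<in>S. if P = Q then complex_of_real (\<alpha> P) else 0)"
    using Q S by (intro sum.cong refl) (auto simp: braket_sigma)
  also have "\<dots> = (if Q \<in> S then complex_of_real (\<alpha> Q) else 0)" using fin by (simp add: sum.delta')
  finally show ?thesis .
qed

lemma pauli_sum_herm: assumes S: "S \<subseteq> paulis n" shows "adj (pauli_sum n \<alpha> S) = pauli_sum n \<alpha> S"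
proof (rule eq_matI)
  fix i j assume "i < dim_row (pauli_sum n \<alpha> S)" "j < dim_col (pauli_sum n \<alpha> S)"
  hence i: "i < 2^n" and j: "j < 2^n" by (auto simp: pauli_sum_def)
  have e: "cnj (pauli_mat P $$ (j,i)) = pauli_mat P $$ (i,j)" if "P \<in> S" for P
  proof -
    have l: "length P = n" using that S by (auto simp: paulis_def)
    have "adj (pauli_mat P) $$ (i,j) = cnj (pauli_mat P $$ (j,i))" using i j l by (simp add: adj_def)
    thus ?thesis by (simp add: pauli_herm)
  qed
  show "adj (pauli_sum n \<alpha> S) $$ (i, j) = pauli_sum n \<alpha> S $$ (i, j)"
    using i j e by (auto simp: adj_def pauli_sum_def cnj_sum intro!: sum.cong)
qed (auto simp: adj_def pauli_sum_def)

lemma kron_herm: assumes H: "H \<in> carrier_mat N N" and aH: "adj H = H"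
  shows "adj (kron (1\<^sub>m N) H) = kron (1\<^sub>m N) H"
proof (rule eq_matI)
  have e: "cnj (H $$ (b,a)) = H $$ (a,b)" if "a < N" "b < N" for a b
  proof -
    have "adj H $$ (a,b) = cnj (H $$ (b,a))" using H that by (simp add: adj_def)
    thus ?thesis using aH by simp
  qed
  fix i j assume "i < dim_row (kron (1\<^sub>m N) H)" "j < dim_col (kron (1\<^sub>m N) H)"
  hence i: "i < N*N" and j: "j < N*N" using H by (auto simp: kron_def)
  hence N: "0 < N" by (cases N) auto
  have "i div N < N" "j div N < N" using i j by (simp_all add: less_mult_imp_div_less)
  moreover have "i mod N < N" "j mod N < N" using N by simp_all
  ultimately show "adj (kron (1\<^sub>m N) H) $$ (i, j) = kron (1\<^sub>m N) H $$ (i, j)"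
    using i j H e by (auto simp: adj_def kron_def)
qed (use H in \<open>auto simp: adj_def kron_def\<close>)

lemma pow_Suc_left: assumes A: "A \<in> carrier_mat d d" shows "A ^\<^sub>m Suc m = A * A ^\<^sub>m m"
proof (induction m)
  case 0 then show ?case using A by simp
next
  case (Suc m)
  have "A ^\<^sub>m Suc (Suc m) = (A * A ^\<^sub>m m) * A" using Suc by simp
  also have "\<dots> = A * (A ^\<^sub>m m * A)" using A by (intro assoc_mult_mat) auto
  finally show ?case by simp
qed



lemma mv3: assumes "A \<in> carrier_mat d d" "B \<in> carrier_mat d d" "C \<in> carrier_mat d d" "v \<in> carrier_vec d"
  shows "(A * B * C) *\<^sub>v v = A *\<^sub>v (B *\<^sub>v (C *\<^sub>v v))"
proof -
  have "(A * B * C) *\<^sub>v v = (A * B) *\<^sub>v (C *\<^sub>v v)" using assms by (intro assoc_mult_mat_vec) auto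
  also have "\<dots> = A *\<^sub>v (B *\<^sub>v (C *\<^sub>v v))" using assms by (intro assoc_mult_mat_vec) auto
  finally show ?thesis .
qed

lemma mv2: assumes "A \<in> carrier_mat d d" "B \<in> carrier_mat d d" "v \<in> carrier_vec d"
  shows "(A * B) *\<^sub>v v = A *\<^sub>v (B *\<^sub>v v)"
  using assms by (intro assoc_mult_mat_vec) auto

theorem lemma4p10:
  fixes n k :: nat and \<alpha> :: "pauli list \<Rightarrow> real" and H :: "complex mat" and l :: nat
  assumes H_def: "H = pauli_sum n \<alpha> (paulis n)"
    and H_norm: "spec_norm H \<le> 1"
    and H_tr: "mtrace H = 0"
    and l_ge: "l \<ge> 2"
  shows "(let A = Pi_D n k * kron (1\<^sub>m (2 ^ n)) H * Pi_D n k;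
              s = sigma_I n;
              Hk = pauli_sum n \<alpha> {P \<in> paulis n. weight P > k}
          in cmod (braket s ((A ^\<^sub>m l) *\<^sub>v s)) \<le> Re (braket s ((A ^\<^sub>m 2) *\<^sub>v s))
             \<and> braket s ((A ^\<^sub>m 2) *\<^sub>v s) = complex_of_real ((nfrob n Hk)\<^sup>2))"
proof -
  define N where "N = (2::nat)^n"
  define d where "d = N * N"
  define Ds where "Ds = D_paulis n k"
  define Gk where "Gk = {P \<in> paulis n. weight P > k}"
  define I0 where "I0 = replicate n PI"
  define P0 where "P0 = projS d (sigma n) Ds"
  define K where "K = kron (1\<^sub>m N) H"
  define A where "A = P0 * K * P0"
  define s where "s = sigma_I n"
  define Hk where "Hk = pauli_sum n \<alpha> Gk"
  have N0: "N > 0" by (simp add: N_def)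
  have onb: "onb d (sigma n) Ds" unfolding d_def Ds_def N_def by (rule onb_D)
  have PiD: "Pi_D n k = P0" unfolding P0_def d_def Ds_def N_def by (rule Pi_D_eq)
  have Hc: "H \<in> carrier_mat N N" unfolding H_def N_def by simp
  have Kc: "K \<in> carrier_mat d d" unfolding K_def d_def using Hc by (simp add: kron_def)
  have P0c: "P0 \<in> carrier_mat d d" unfolding P0_def by simp
  have Ac: "A \<in> carrier_mat d d" unfolding A_def using Kc P0c by simp
  have I0p: "I0 \<in> paulis n" by (simp add: I0_def paulis_def)
  have I0D: "I0 \<in> Ds" using I0p by (simp add: Ds_def D_paulis_def I0_def)
  have Gkp: "Gk \<subseteq> paulis n" by (auto simp: Gk_def)
  have I0G: "I0 \<notin> Gk" by (simp add: Gk_def I0_def weight_def)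
  have DsG: "Ds = insert I0 Gk" using I0D by (auto simp: Ds_def D_paulis_def Gk_def I0_def)
  have finG: "finite Gk" using finite_subset[OF Gkp finite_paulis] .
  have s_sig: "s = sigma n I0"
    unfolding s_def sigma_vz[OF I0p] sigma_I_vz by (simp add: I0_def pauli_I)
  have sd: "dim_vec s = d" by (simp add: s_sig dim_sigma[OF I0p] d_def N_def)
  have sc: "s \<in> carrier_vec d" by (rule carrier_vecI[OF sd])
  have vzH: "vz N H = vz (2^n) (pauli_sum n \<alpha> (paulis n))" by (simp add: H_def N_def)
  have aI: "\<alpha> I0 = 0"
  proof -
    have "mtrace H = fip N (1\<^sub>m N) H" using Hc by (rule mtrace_fip1)
    also have "\<dots> = of_nat N * braket (vz N (1\<^sub>m N)) (vz N H)" using N0 by (simp add: braket_vz)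
    also have "vz N (1\<^sub>m N) = sigma n I0" using s_sig by (simp add: s_def sigma_I_vz N_def)
    also have "braket (sigma n I0) (vz N H) = complex_of_real (\<alpha> I0)"
      unfolding vzH using coef[OF I0p subset_refl finite_paulis] I0p by simp
    finally show ?thesis using H_tr N0 by simp
  qed
  have P0s: "P0 *\<^sub>v s = s"
  proof -
    have finD: "finite Ds" using finite_subset[OF _ finite_paulis, of Ds] by (auto simp: Ds_def D_paulis_def)
    have sj: "(\<Sum>P\<in>Ds. (if P = I0 then 1 else 0) * sigma n P $ j) = s $ j" for j
    proof -
      have "(\<Sum>P\<in>Ds. (if P = I0 then 1 else 0) * sigma n P $ j) = (\<Sum>P\<in>Ds. if P = I0 then sigma n P $ j else 0)"
        by (rule sum.cong) auto
      also have "\<dots> = sigma n I0 $ j" using finD I0D by (simp add: sum.delta')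
      finally show ?thesis by (simp add: s_sig)
    qed
    have "s = vec d (\<lambda>j. \<Sum>P\<in>Ds. (if P = I0 then 1 else 0) * sigma n P $ j)"
      unfolding sj using sd by (intro eq_vecI) auto
    hence "s \<in> spanS d (sigma n) Ds" unfolding spanS_def
      by (intro CollectI exI[of _ "\<lambda>P. if P = I0 then 1 else 0"]) simp
    thus ?thesis unfolding P0_def by (rule projS_fix[OF onb])
  qed
  have Ks: "K *\<^sub>v s = vz N H"
    unfolding K_def s_def sigma_I_vz N_def[symmetric] using kron_vz[OF Hc one_carrier_mat] right_mult_one_mat[OF Hc] by simp
  have vzHc: "vz N H \<in> carrier_vec d" by (rule carrier_vecI) (simp add: d_def)
  have w_eq: "P0 *\<^sub>v vz N H = vz N Hk"
  proof -
    have "P0 *\<^sub>v vz N H = vec d (\<lambda>i. \<Sum>Q\<in>Ds. braket (sigma n Q) (vz N H) * sigma n Q $ i)"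
      unfolding P0_def by (rule projS_apply[OF onb vzHc])
    also have "\<dots> = vec d (\<lambda>i. \<Sum>Q\<in>Ds. complex_of_real (\<alpha> Q) * sigma n Q $ i)"
    proof -
      have "braket (sigma n Q) (vz N H) = complex_of_real (\<alpha> Q)" if "Q \<in> Ds" for Q
      proof -
        have Qp: "Q \<in> paulis n" using that by (simp add: Ds_def D_paulis_def)
        show ?thesis unfolding vzH using coef[OF Qp subset_refl finite_paulis] Qp by simp
      qed
      thus ?thesis by (auto intro!: sum.cong)
    qed
    also have "\<dots> = vec d (\<lambda>i. \<Sum>Q\<in>Gk. complex_of_real (\<alpha> Q) * sigma n Q $ i)"
      unfolding DsG using finG I0G aI by simp
    also have "\<dots> = vz N Hk" unfolding Hk_def N_def d_def by (rule vz_pauli_sum[OF Gkp, symmetric])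
    finally show ?thesis .
  qed
  define w where "w = A *\<^sub>v s"
  have w: "w = vz N Hk"
  proof -
    have "w = P0 *\<^sub>v (K *\<^sub>v (P0 *\<^sub>v s))"
      unfolding w_def A_def by (rule mv3[OF P0c Kc P0c sc])
    thus ?thesis using P0s Ks w_eq by simp
  qed
  have wd: "dim_vec w = d" by (simp add: w d_def)
  have wc: "w \<in> carrier_vec d" by (rule carrier_vecI[OF wd])
  have aH: "adj H = H" unfolding H_def by (rule pauli_sum_herm) simp
  have aK: "adj K = K" unfolding K_def by (rule kron_herm[OF Hc aH])
  have aP0: "adj P0 = P0" unfolding P0_def by (rule projS_adj)
  have aA: "adj A = A"
  proof -
    have "adj A = adj P0 * adj (P0 * K)" unfolding A_def by (rule adj_mult[of "P0 * K" d d P0 d]) (use P0c Kc in auto)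
    also have "adj (P0 * K) = adj K * adj P0" by (rule adj_mult[OF P0c Kc])
    finally show ?thesis using aK aP0 P0c Kc by (simp add: A_def assoc_mult_mat[of _ d d _ d _ d])
  qed
  have Hcontr: "\<And>u. u \<in> carrier_vec N \<Longrightarrow> vnorm (H *\<^sub>v u) \<le> vnorm u"
    using spec_contr[OF Hc H_norm] by blast
  have Acontr: "vnorm (A *\<^sub>v v) \<le> vnorm v" if v: "v \<in> carrier_vec d" for v
  proof -
    have "A *\<^sub>v v = P0 *\<^sub>v (K *\<^sub>v (P0 *\<^sub>v v))"
      unfolding A_def by (rule mv3[OF P0c Kc P0c v])
    also have "vnorm \<dots> \<le> vnorm (K *\<^sub>v (P0 *\<^sub>v v))"
      using Kc P0c v by (intro herm_contr[OF P0c projS_idem[OF onb, folded P0_def] aP0]) auto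
    also have "\<dots> \<le> vnorm (P0 *\<^sub>v v)"
      unfolding K_def using P0c v by (intro kron_contr[OF Hc Hcontr]) (auto simp: d_def)
    also have "\<dots> \<le> vnorm v" by (rule herm_contr[OF P0c projS_idem[OF onb, folded P0_def] aP0 v])
    finally show ?thesis .
  qed
  have powcontr: "vnorm ((A ^\<^sub>m m) *\<^sub>v v) \<le> vnorm v" if "v \<in> carrier_vec d" for m v
    using that
  proof (induction m arbitrary: v)
    case 0 then show ?case using Ac by simp
  next
    case (Suc m)
    have "(A ^\<^sub>m Suc m) *\<^sub>v v = (A ^\<^sub>m m) *\<^sub>v (A *\<^sub>v v)"
      using mv2[OF _ Ac Suc.prems, of "A ^\<^sub>m m"] Ac by simp
    also have "vnorm \<dots> \<le> vnorm (A *\<^sub>v v)" using Ac Suc.prems by (intro Suc.IH) auto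
    also have "\<dots> \<le> vnorm v" by (rule Acontr[OF Suc.prems])
    finally show ?case .
  qed
  have A2: "braket s ((A ^\<^sub>m 2) *\<^sub>v s) = complex_of_real ((vnorm w)\<^sup>2)"
  proof -
    have "A ^\<^sub>m 2 = A * A" using Ac by (simp add: numeral_2_eq_2)
    hence "(A ^\<^sub>m 2) *\<^sub>v s = A *\<^sub>v w" unfolding w_def using mv2[OF Ac Ac sc] by simp
    hence "braket s ((A ^\<^sub>m 2) *\<^sub>v s) = braket w w"
      using herm_braket[OF Ac aA sd, of w] wd by (simp add: w_def)
    thus ?thesis by (simp add: braket_self)
  qed
  have frob: "(nfrob n Hk)\<^sup>2 = (vnorm w)\<^sup>2"
  proof -
    have Hkc: "Hk \<in> carrier_mat N N" by (simp add: Hk_def N_def)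
    have "complex_of_real ((vnorm w)\<^sup>2) = braket w w" by (simp add: braket_self)
    also have "\<dots> = fip N Hk Hk / of_nat N" by (simp add: w braket_vz)
    also have "fip N Hk Hk = mtrace (adj Hk * Hk)" by (rule mtrace_adj[OF Hkc, symmetric])
    finally have "mtrace (adj Hk * Hk) = of_nat N * complex_of_real ((vnorm w)\<^sup>2)" using N0 by (simp add: field_simps)
    hence "Re (mtrace (adj Hk * Hk)) / 2 ^ n = (vnorm w)\<^sup>2" using N0 by (simp add: N_def)
    thus ?thesis unfolding nfrob_def by simp
  qed
  obtain m where lm: "l = Suc (Suc m)" using l_ge by (metis add_2_eq_Suc le_Suc_ex)
  have bound: "cmod (braket s ((A ^\<^sub>m l) *\<^sub>v s)) \<le> (vnorm w)\<^sup>2"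
  proof -
    let ?B = "A ^\<^sub>m m"
    have Bc: "?B \<in> carrier_mat d d" using Ac by simp
    have "A ^\<^sub>m l = A * ?B * A" unfolding lm using pow_Suc_left[OF Ac, of m] by simp
    hence "(A ^\<^sub>m l) *\<^sub>v s = A *\<^sub>v (?B *\<^sub>v w)"
      unfolding w_def using mv3[OF Ac Bc Ac sc] by simp
    hence "braket s ((A ^\<^sub>m l) *\<^sub>v s) = braket w (?B *\<^sub>v w)"
      using herm_braket[OF Ac aA sd, of "?B *\<^sub>v w"] Bc wd by (simp add: w_def)
    hence "cmod (braket s ((A ^\<^sub>m l) *\<^sub>v s)) \<le> vnorm w * vnorm (?B *\<^sub>v w)"
      using braket_CS[of w "?B *\<^sub>v w"] Bc wd carrier_matD[OF Ac] by simp
    also have "\<dots> \<le> vnorm w * vnorm w"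
      using powcontr[OF wc, of m] vnorm_nonneg[of w] by (intro mult_left_mono) auto
    finally show ?thesis by (simp add: power2_eq_square)
  qed
  show ?thesis
    unfolding Let_def PiD N_def[symmetric] K_def[symmetric] A_def[symmetric] s_def[symmetric]
      Gk_def[symmetric] Hk_def[symmetric]
    using bound A2 frob by simp
qed


end
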